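(* There exists a family $(\mathcal{A}_n)_{n\in\mathbb{N}}$ of (non-deterministic) generalised Büchi automata such that for every $n$, $\mathcal{A}_n$ has $n+1$ states and uses $2$ output colours, and every generalised Büchi automaton recognising $\mathcal{L}(\mathcal{A}_n)$ with the minimal number of states (among generalised Büchi automata recognising $\mathcal{L}(\mathcal{A}_n)$) uses at least $2^n$ output colours.
   Context: An automaton is a tuple $(Q,\Sigma,q_{\mathrm{init}},\Delta,\Gamma,\mathrm{col},W)$ with finite state set, finite input alphabet, initial state, transitions $\Delta\subseteq Q\times\Sigma\times Q$ (arbitrary, possibly non-deterministic), output alphabet $\Gamma$, labelling $\mathrm{col}:\Delta\to\Gamma$, acceptance condition $W\subseteq\Gamma^\omega$. A run on $w=a_1a_2\cdots$ is a sequence $(q_0,a_1,q_1)(q_1,a_2,q_2)\cdots$ of transitions with $q_0=q_{\mathrm{init}}$, accepting if its label sequence is in $W$; $\mathcal{L}(\mathcal{A})$ is the set of words with an accepting run. A generalised Büchi automaton with finite output colour set $C$ has $\Gamma=2^C$ and $W=\{x : \text{every } c\in C \text{ occurs in infinitely many letters of } x\}$; its number of output colours is $|C|$. *)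

theory Defs
  imports Main
begin

record gba =
  states :: "nat set"
  alphabet :: "nat set"
  init :: nat
  trans :: "(nat \<times> nat \<times> nat) set"
  colours :: "nat set"
  col :: "nat \<times> nat \<times> nat \<Rightarrow> nat set"

definition wf_gba :: "gba \<Rightarrow> bool" where
  "wf_gba A \<longleftrightarrow> finite (states A) \<and> finite (alphabet A) \<and> init A \<in> states A
     \<and> trans A \<subseteq> states A \<times> alphabet A \<times> states A
     \<and> finite (colours A) \<and> (\<forall>t \<in> trans A. col A t \<subseteq> colours A)"

definition words :: "gba \<Rightarrow> (nat \<Rightarrow> nat) set" where
  "words A = {w. \<forall>i. w i \<in> alphabet A}"

definition is_run :: "gba \<Rightarrow> (nat \<Rightarrow> nat) \<Rightarrow> (nat \<Rightarrow> nat) \<Rightarrow> bool" where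
  "is_run A w r \<longleftrightarrow> r 0 = init A \<and> (\<forall>i. (r i, w i, r (Suc i)) \<in> trans A)"

definition accepting_run :: "gba \<Rightarrow> (nat \<Rightarrow> nat) \<Rightarrow> (nat \<Rightarrow> nat) \<Rightarrow> bool" where
  "accepting_run A w r \<longleftrightarrow> is_run A w r \<and>
     (\<forall>c \<in> colours A. \<exists>\<^sub>\<infinity> i. c \<in> col A (r i, w i, r (Suc i)))"

definition lang :: "gba \<Rightarrow> (nat \<Rightarrow> nat) set" where
  "lang A = {w \<in> words A. \<exists>r. accepting_run A w r}"

definition recognises_same :: "gba \<Rightarrow> gba \<Rightarrow> bool" where
  "recognises_same B A \<longleftrightarrow> wf_gba B \<and> alphabet B = alphabet A \<and> lang B = lang A"

end

theory Submission
  imports Defs "HOL-Library.Infinite_Set"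
begin

lemma one_state_run:
  assumes "wf_gba B" "states B = {init B}" "is_run B w r"
  shows "r j = init B"
proof (induction j)
  case 0 then show ?case using assms(3) by (simp add: is_run_def)
next
  case (Suc j)
  have "(r j, w j, r (Suc j)) \<in> trans B" using assms(3) by (simp add: is_run_def)
  then have "r (Suc j) \<in> states B" using assms(1) by (auto simp: wf_gba_def)
  then show ?case using assms(2) by simp
qed

lemma one_state_lang:
  assumes "wf_gba B" "states B = {init B}"
  shows "w \<in> lang B \<longleftrightarrow> w \<in> words B \<and> (\<forall>j. (init B, w j, init B) \<in> trans B) \<and>
     (\<forall>c\<in>colours B. \<exists>\<^sub>\<infinity> j. c \<in> col B (init B, w j, init B))"
proof
  assume "w \<in> lang B"
  then obtain r where w: "w \<in> words B" and r: "accepting_run B w r" by (auto simp: lang_def)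
  have "\<And>j. r j = init B" using one_state_run[OF assms] r by (auto simp: accepting_run_def)
  then show "w \<in> words B \<and> (\<forall>j. (init B, w j, init B) \<in> trans B) \<and>
     (\<forall>c\<in>colours B. \<exists>\<^sub>\<infinity> j. c \<in> col B (init B, w j, init B))"
    using w r by (auto simp: accepting_run_def is_run_def)
next
  assume h: "w \<in> words B \<and> (\<forall>j. (init B, w j, init B) \<in> trans B) \<and>
     (\<forall>c\<in>colours B. \<exists>\<^sub>\<infinity> j. c \<in> col B (init B, w j, init B))"
  then have "accepting_run B w (\<lambda>_. init B)" by (auto simp: accepting_run_def is_run_def)
  then show "w \<in> lang B" using h by (auto simp: lang_def)
qed

definition cyc :: "nat list \<Rightarrow> nat \<Rightarrow> nat" where
  "cyc xs = (\<lambda>j. xs ! (j mod length xs))"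

lemma cyc_INFM:
  assumes "xs \<noteq> []"
  shows "(\<exists>\<^sub>\<infinity> j. Q (cyc xs j)) \<longleftrightarrow> (\<exists>x\<in>set xs. Q x)"
proof
  assume "\<exists>\<^sub>\<infinity> j. Q (cyc xs j)"
  then obtain j where "Q (cyc xs j)" by (auto simp: INFM_nat)
  then show "\<exists>x\<in>set xs. Q x" using assms by (auto simp: cyc_def)
next
  assume "\<exists>x\<in>set xs. Q x"
  then obtain k where k: "k < length xs" "Q (xs ! k)" by (auto simp: in_set_conv_nth)
  show "\<exists>\<^sub>\<infinity> j. Q (cyc xs j)" unfolding INFM_nat
  proof
    fix m
    have "k + Suc m * length xs > m" using k(1)
    proof -
      have "length xs \<ge> 1" using k(1) by simp
      then have "Suc m * length xs \<ge> Suc m" using mult_le_mono2[of 1 "length xs" "Suc m"] by simp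
      then show ?thesis by simp
    qed
    moreover have "(k + Suc m * length xs) mod length xs = k" using k(1) by (metis mod_mult_self1 mod_less)
    then have "cyc xs (k + Suc m * length xs) = xs ! k" by (simp only: cyc_def)
    ultimately show "\<exists>n>m. Q (cyc xs n)" using k(2) by metis
  qed
qed

lemma cyc_set: "xs \<noteq> [] \<Longrightarrow> cyc xs j \<in> set xs"
  by (simp add: cyc_def)


definition An :: "nat \<Rightarrow> gba" where
  "An n = \<lparr>states = {..n}, alphabet = {..<2*n}, init = 0,
     trans = {(p,a,q). p \<le> n \<and> q \<le> n \<and> a < 2*n \<and> (p = 0 \<or> p = q)},
     colours = {0,1},
     col = (\<lambda>(p,a,q). if 0 < p \<and> p = q \<and> a = 2*p-2 then {0}
                     else if 0 < p \<and> p = q \<and> a = 2*p-1 then {1} else {})\<rparr>"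

definition B1 :: "nat \<Rightarrow> gba" where
  "B1 n = \<lparr>states = {0}, alphabet = {..<2*n}, init = 0,
     trans = {(p,a,q). p = 0 \<and> q = 0 \<and> a < 2*n},
     colours = {..<2^n},
     col = (\<lambda>(p,a,q). {c. c < 2^n \<and> (bit c (a div 2) \<longleftrightarrow> odd a)})\<rparr>"

definition PP :: "nat \<Rightarrow> (nat \<Rightarrow> nat) \<Rightarrow> bool" where
  "PP n w \<longleftrightarrow> (\<exists>i<n. (\<exists>\<^sub>\<infinity> j. w j = 2*i) \<and> (\<exists>\<^sub>\<infinity> j. w j = 2*i+1))"

lemma wf_An: "wf_gba (An n)"
  by (auto simp: wf_gba_def An_def)

lemma wf_B1: "wf_gba (B1 n)"
  by (auto simp: wf_gba_def B1_def)

lemma lang_An: "w \<in> lang (An n) \<longleftrightarrow> w \<in> words (An n) \<and> PP n w"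
proof
  assume "w \<in> lang (An n)"
  then obtain r where w: "w \<in> words (An n)" and r: "accepting_run (An n) w r"
    by (auto simp: lang_def)
  have tr: "\<And>j. (r j, w j, r (Suc j)) \<in> trans (An n)" using r by (auto simp: accepting_run_def is_run_def)
  have c0: "\<exists>\<^sub>\<infinity> j. 0 \<in> col (An n) (r j, w j, r (Suc j))"
    and c1: "\<exists>\<^sub>\<infinity> j. 1 \<in> col (An n) (r j, w j, r (Suc j))"
    using r by (auto simp: accepting_run_def An_def)
  then obtain j0 where j0: "0 \<in> col (An n) (r j0, w j0, r (Suc j0))" by (auto simp: INFM_nat)
  define k where "k = r j0"
  have kpos: "0 < k" using j0 by (auto simp: An_def k_def split: if_splits)
  have kn: "k \<le> n" using tr[of j0] by (auto simp: An_def k_def)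
  have stay: "r (j0 + m) = k" for m
  proof (induction m)
    case 0 then show ?case by (simp add: k_def)
  next
    case (Suc m)
    then show ?case using tr[of "j0 + m"] kpos by (auto simp: An_def)
  qed
  have stay': "j \<ge> j0 \<Longrightarrow> r j = k" for j using stay[of "j - j0"] by simp
  have "\<exists>\<^sub>\<infinity> j. w j = 2*(k-1)" unfolding INFM_nat
  proof
    fix m
    obtain j where j: "j > max m j0" "0 \<in> col (An n) (r j, w j, r (Suc j))"
      using c0 unfolding INFM_nat by (meson max.strict_boundedE)
    have "r j = k" "r (Suc j) = k" using stay' j(1) by auto
    then have "w j = 2*(k-1)" using j(2) kpos by (auto simp: An_def split: if_splits)
    then show "\<exists>j>m. w j = 2*(k-1)" using j(1) by auto
  qed
  moreover have "\<exists>\<^sub>\<infinity> j. w j = 2*(k-1)+1" unfolding INFM_nat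
  proof
    fix m
    obtain j where j: "j > max m j0" "1 \<in> col (An n) (r j, w j, r (Suc j))"
      using c1 unfolding INFM_nat by (meson max.strict_boundedE)
    have "r j = k" "r (Suc j) = k" using stay' j(1) by auto
    then have "w j = 2*(k-1)+1" using j(2) kpos by (auto simp: An_def split: if_splits)
    then show "\<exists>j>m. w j = 2*(k-1)+1" using j(1) by auto
  qed
  ultimately have "PP n w" unfolding PP_def using kpos kn
    by (intro exI[of _ "k-1"]) auto
  then show "w \<in> words (An n) \<and> PP n w" using w by simp
next
  assume h: "w \<in> words (An n) \<and> PP n w"
  then obtain i where i: "i < n" "\<exists>\<^sub>\<infinity> j. w j = 2*i" "\<exists>\<^sub>\<infinity> j. w j = 2*i+1"
    by (auto simp: PP_def)
  define r where "r = (\<lambda>j::nat. if j = 0 then 0 else Suc i)"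
  have wl: "\<And>j. w j < 2*n" using h by (auto simp: words_def An_def)
  have run: "is_run (An n) w r" using i(1) wl by (auto simp: is_run_def An_def r_def)
  have a0: "\<exists>\<^sub>\<infinity> j. 0 \<in> col (An n) (r j, w j, r (Suc j))" unfolding INFM_nat
  proof
    fix m
    obtain j where "j > m" "w j = 2*i" using i(2) by (auto simp: INFM_nat)
    then show "\<exists>j>m. 0 \<in> col (An n) (r j, w j, r (Suc j))"
      by (intro exI[of _ j]) (auto simp: An_def r_def)
  qed
  have a1: "\<exists>\<^sub>\<infinity> j. 1 \<in> col (An n) (r j, w j, r (Suc j))" unfolding INFM_nat
  proof
    fix m
    obtain j where "j > m" "w j = 2*i+1" using i(3) by (auto simp: INFM_nat)
    then show "\<exists>j>m. 1 \<in> col (An n) (r j, w j, r (Suc j))"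
      by (intro exI[of _ j]) (auto simp: An_def r_def)
  qed
  have "accepting_run (An n) w r" using run a0 a1
    by (auto simp: accepting_run_def An_def)
  then show "w \<in> lang (An n)" using h by (auto simp: lang_def)
qed


lemma cnf_dnf:
  fixes I :: "nat \<Rightarrow> bool"
  shows "(\<forall>c<(2::nat)^n. \<exists>i<n. I (2*i + of_bool (bit c i))) \<longleftrightarrow> (\<exists>i<n. I (2*i) \<and> I (2*i+1))"
proof
  assume h: "\<forall>c<(2::nat)^n. \<exists>i<n. I (2*i + of_bool (bit c i))"
  show "\<exists>i<n. I (2*i) \<and> I (2*i+1)"
  proof (rule ccontr)
    assume nh: "\<not> (\<exists>i<n. I (2*i) \<and> I (2*i+1))"
    define c :: nat where "c = horner_sum of_bool 2 (map (\<lambda>i. I (2*i)) [0..<n])"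
    have "c < 2 ^ n" unfolding c_def using horner_sum_of_bool_2_less[of "map (\<lambda>i. I (2*i)) [0..<n]"]
      by simp
    then obtain i where i: "i < n" "I (2*i + of_bool (bit c i))" using h by blast
    have "bit c i = I (2*i)" using i(1) by (simp add: c_def bit_horner_sum_bit_iff)
    then show False using i nh by (cases "I (2*i)") auto
  qed
next
  assume "\<exists>i<n. I (2*i) \<and> I (2*i+1)"
  then show "\<forall>c<(2::nat)^n. \<exists>i<n. I (2*i + of_bool (bit c i))"
    by (metis of_bool_eq(1) of_bool_eq(2) add_0_right)
qed

lemma B1_pointwise:
  assumes "(a::nat) < 2*n"
  shows "(bit c (a div 2) \<longleftrightarrow> odd a) \<longleftrightarrow> (\<exists>i\<in>{..<n}. a = 2*i + of_bool (bit c i))"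
proof
  assume h: "bit c (a div 2) \<longleftrightarrow> odd a"
  have "a = 2*(a div 2) + of_bool (bit c (a div 2))" using h by (cases "odd a") auto
  moreover have "a div 2 < n" using assms by simp
  ultimately show "\<exists>i\<in>{..<n}. a = 2*i + of_bool (bit c i)" by blast
next
  assume "\<exists>i\<in>{..<n}. a = 2*i + of_bool (bit c i)"
  then obtain i where "a = 2*i + of_bool (bit c i)" by blast
  then show "bit c (a div 2) \<longleftrightarrow> odd a" by (cases "bit c i") auto
qed

lemma lang_B1: "w \<in> lang (B1 n) \<longleftrightarrow> w \<in> words (An n) \<and> PP n w"
proof -
  have st: "states (B1 n) = {init (B1 n)}" by (simp add: B1_def)
  have wd: "words (B1 n) = words (An n)" by (simp add: words_def B1_def An_def)
  have "w \<in> lang (B1 n) \<longleftrightarrow> w \<in> words (An n) \<and>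
     (\<forall>c<(2::nat)^n. \<exists>\<^sub>\<infinity> j. (bit c (w j div 2) \<longleftrightarrow> odd (w j)))"
    unfolding one_state_lang[OF wf_B1 st] wd
    by (auto simp: B1_def words_def An_def)
  also have "\<dots> \<longleftrightarrow> w \<in> words (An n) \<and> PP n w"
  proof (cases "w \<in> words (An n)")
    case True
    then have wl: "\<And>j. w j < 2*n" by (auto simp: words_def An_def)
    have pc: "(\<exists>\<^sub>\<infinity> j. (bit c (w j div 2) \<longleftrightarrow> odd (w j))) \<longleftrightarrow>
          (\<exists>i<n. \<exists>\<^sub>\<infinity> j. w j = 2*i + of_bool (bit c i))" for c
    proof -
      have "(\<exists>\<^sub>\<infinity> j. (bit c (w j div 2) \<longleftrightarrow> odd (w j))) \<longleftrightarrow>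
          (\<exists>i\<in>{..<n}. \<exists>\<^sub>\<infinity> j. w j = 2*i + of_bool (bit c i))"
        unfolding B1_pointwise[OF wl] by (rule INFM_finite_Bex_distrib) simp
      then show ?thesis unfolding Bex_def lessThan_iff .
    qed
    then have "(\<forall>c<(2::nat)^n. \<exists>\<^sub>\<infinity> j. (bit c (w j div 2) \<longleftrightarrow> odd (w j))) \<longleftrightarrow>
       (\<forall>c<(2::nat)^n. \<exists>i<n. (\<lambda>a. \<exists>\<^sub>\<infinity> j. w j = a) (2*i + of_bool (bit c i)))" by (simp only: pc)
    also have "\<dots> \<longleftrightarrow> PP n w" unfolding PP_def by (rule cnf_dnf[of n "\<lambda>a. \<exists>\<^sub>\<infinity> j. w j = a"])
    finally show ?thesis using True by simp
  qed simp
  finally show ?thesis .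
qed


lemma cyc_INF_eq: "xs \<noteq> [] \<Longrightarrow> (\<exists>\<^sub>\<infinity> j. cyc xs j = a) \<longleftrightarrow> a \<in> set xs"
  using cyc_INFM[of xs "\<lambda>x. x = a"] by simp

lemma PP_cyc: "xs \<noteq> [] \<Longrightarrow> PP n (cyc xs) \<longleftrightarrow> (\<exists>i<n. 2*i \<in> set xs \<and> 2*i+1 \<in> set xs)"
  unfolding PP_def by (simp add: cyc_INF_eq)

lemma cyc_words: "xs \<noteq> [] \<Longrightarrow> set xs \<subseteq> {..<2*n} \<Longrightarrow> cyc xs \<in> words (An n)"
  using cyc_set[of xs] by (auto simp: words_def An_def)

definition Z :: "nat \<Rightarrow> nat \<Rightarrow> nat list" where
  "Z n c = map (\<lambda>i. 2*i + of_bool (bit c i)) [0..<n]"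

lemma bit_diff:
  assumes "(c::nat) < 2^n" "c' < 2^n" "c \<noteq> c'"
  shows "\<exists>i<n. bit c i \<noteq> bit c' i"
proof (rule ccontr)
  assume "\<not> (\<exists>i<n. bit c i \<noteq> bit c' i)"
  then have "bit (take_bit n c) i = bit (take_bit n c') i" for i
    by (auto simp: bit_take_bit_iff)
  then have "take_bit n c = take_bit n c'" by (simp add: bit_eq_iff)
  then show False using assms by (simp add: take_bit_nat_eq_self)
qed

lemma lower_general:
  assumes n: "n \<ge> 1" and rs: "recognises_same B (An n)" and st: "states B = {init B}"
  shows "card (colours B) \<ge> 2^n"
proof -
  define s where "s = init B"
  have wf: "wf_gba B" using rs by (simp add: recognises_same_def)
  have wd: "words B = words (An n)" using rs by (simp add: recognises_same_def words_def)
  have L: "w \<in> words (An n) \<and> PP n w \<longleftrightarrow> w \<in> words (An n) \<and> (\<forall>j. (s, w j, s) \<in> trans B) \<and>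
     (\<forall>c\<in>colours B. \<exists>\<^sub>\<infinity> j. c \<in> col B (s, w j, s))" for w
    using one_state_lang[OF wf st, of w] rs lang_An[of w n] wd
    by (auto simp: recognises_same_def s_def)
  have Zne: "Z n c \<noteq> []" for c using n by (simp add: Z_def)
  have Zsub: "set (Z n c) \<subseteq> {..<2*n}" for c by (auto simp: Z_def)
  define allL where "allL = [0..<2*n]"
  have allne: "allL \<noteq> []" using n by (simp add: allL_def)
  have "PP n (cyc allL)" using n allne unfolding PP_cyc[OF allne] by (intro exI[of _ 0]) (auto simp: allL_def)
  moreover have "cyc allL \<in> words (An n)" by (rule cyc_words[OF allne]) (auto simp: allL_def)
  ultimately have "\<forall>j. (s, cyc allL j, s) \<in> trans B" using L by blast
  then have trall: "(s, a, s) \<in> trans B" if "a < 2*n" for a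
    using spec[of _ a] that by (simp add: cyc_def allL_def) (metis mod_less)
  have trw: "\<forall>j. (s, w j, s) \<in> trans B" if "w \<in> words (An n)" for w
    using that trall by (auto simp: words_def An_def)
  have "\<exists>d\<in>colours B. \<forall>x\<in>set (Z n c). d \<notin> col B (s, x, s)" if "c < 2^n" for c
  proof -
    have np: "\<not> PP n (cyc (Z n c))" unfolding PP_cyc[OF Zne]
    proof
      assume "\<exists>i<n. 2*i \<in> set (Z n c) \<and> 2*i+1 \<in> set (Z n c)"
      then obtain i where "2*i \<in> set (Z n c)" "2*i+1 \<in> set (Z n c)" by blast
      then obtain i1 i2 where "2*i = 2*i1 + of_bool (bit c i1)" "2*i+1 = 2*i2 + of_bool (bit c i2)"
        by (auto simp: Z_def)
      then show False by (cases "bit c i1"; cases "bit c i2") (auto, presburger+)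
    qed
    have wc: "cyc (Z n c) \<in> words (An n)" using cyc_words[OF Zne Zsub] .
    then obtain d where "d \<in> colours B" "\<not> (\<exists>\<^sub>\<infinity> j. d \<in> col B (s, cyc (Z n c) j, s))"
      using L[of "cyc (Z n c)"] np trw[OF wc] by blast
    then show ?thesis using cyc_INFM[OF Zne, of "\<lambda>x. d \<in> col B (s, x, s)"] by blast
  qed
  then obtain g where g: "\<And>c. c < 2^n \<Longrightarrow> g c \<in> colours B \<and> (\<forall>x\<in>set (Z n c). g c \<notin> col B (s, x, s))"
    by metis
  have inj: "inj_on g {..<2^n}"
  proof (rule inj_onI)
    fix c c' assume c: "c \<in> {..<(2::nat)^n}" "c' \<in> {..<(2::nat)^n}" "g c = g c'"
    show "c = c'"
    proof (rule ccontr)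
      assume "c \<noteq> c'"
      then obtain i where i: "i < n" "bit c i \<noteq> bit c' i" using bit_diff[of c n c'] c by auto
      define xs where "xs = Z n c @ Z n c'"
      have xne: "xs \<noteq> []" using Zne by (simp add: xs_def)
      have "2*i + of_bool (bit c i) \<in> set xs" "2*i + of_bool (bit c' i) \<in> set xs"
        using i(1) by (auto simp: xs_def Z_def)
      then have "2*i \<in> set xs \<and> 2*i+1 \<in> set xs" using i(2) by (cases "bit c i") auto
      then have "PP n (cyc xs)" unfolding PP_cyc[OF xne] using i(1) by blast
      moreover have wx: "cyc xs \<in> words (An n)" using cyc_words[OF xne] Zsub by (simp add: xs_def)
      ultimately have "\<exists>\<^sub>\<infinity> j. g c \<in> col B (s, cyc xs j, s)" using L[of "cyc xs"] g c by auto
      then obtain x where "x \<in> set xs" "g c \<in> col B (s, x, s)"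
        using cyc_INFM[OF xne, of "\<lambda>x. g c \<in> col B (s, x, s)"] by blast
      then show False using g[of c] g[of c'] c by (auto simp: xs_def)
    qed
  qed
  have fin: "finite (colours B)" using wf by (simp add: wf_gba_def)
  have "g ` {..<2^n} \<subseteq> colours B" using g by auto
  then have "card (g ` {..<2^n}) \<le> card (colours B)" using fin by (rule card_mono[rotated])
  then show ?thesis using card_image[OF inj] by simp
qed


definition A0 :: gba where
  "A0 = \<lparr>states = {0}, alphabet = {0,1}, init = 0,
     trans = {(0,0,0),(0,1,0)}, colours = {0,1},
     col = (\<lambda>(p,a,q). if a = 0 then {0,1} else {})\<rparr>"

lemma wf_A0: "wf_gba A0" by (auto simp: wf_gba_def A0_def)

lemma single_state:
  assumes "wf_gba B" "card (states B) \<le> 1"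
  shows "states B = {init B}"
proof -
  have "finite (states B)" "init B \<in> states B" using assms(1) by (auto simp: wf_gba_def)
  then show ?thesis using assms(2)
    by (auto simp: card_le_Suc0_iff_eq)
qed

lemma lower_zero:
  assumes rs: "recognises_same B A0" and st: "states B = {init B}"
  shows "card (colours B) \<ge> 1"
proof (rule ccontr)
  assume "\<not> card (colours B) \<ge> 1"
  moreover have wf: "wf_gba B" using rs by (simp add: recognises_same_def)
  ultimately have ce: "colours B = {}" by (auto simp: wf_gba_def card_gt_0_iff Suc_le_eq)
  have wd: "words B = words A0" using rs by (simp add: recognises_same_def words_def)
  define w1 where "w1 = (\<lambda>j::nat. if j = 0 then 1::nat else 0)"
  have "accepting_run A0 w1 (\<lambda>_. 0)" unfolding accepting_run_def is_run_def INFM_nat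
  proof (intro conjI ballI allI)
    fix c m
    show "\<exists>n>m. c \<in> col A0 (0, w1 n, 0)" if "c \<in> colours A0"
      using that by (intro exI[of _ "Suc m"]) (auto simp: A0_def w1_def)
  qed (auto simp: A0_def w1_def)
  moreover have "w1 \<in> words A0" by (auto simp: words_def A0_def w1_def)
  ultimately have "w1 \<in> lang A0" by (auto simp: lang_def)
  then have "w1 \<in> lang B" using rs by (simp add: recognises_same_def)
  then have "(init B, 1, init B) \<in> trans B"
  proof -
    have "\<forall>j. (init B, w1 j, init B) \<in> trans B" using one_state_lang[OF wf st, of w1] \<open>w1 \<in> lang B\<close> by blast
    then have "(init B, w1 0, init B) \<in> trans B" by blast
    then show ?thesis by (simp add: w1_def)
  qed
  moreover have "(\<lambda>_. 1) \<in> words B" using wd by (auto simp: words_def A0_def)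
  ultimately have "(\<lambda>_::nat. 1::nat) \<in> lang B" using one_state_lang[OF wf st, of "\<lambda>_. 1"] ce by auto
  then have "(\<lambda>_::nat. 1::nat) \<in> lang A0" using rs by (simp add: recognises_same_def)
  then obtain r where "accepting_run A0 (\<lambda>_. 1) r" by (auto simp: lang_def)
  then have "\<exists>\<^sub>\<infinity> j. (0::nat) \<in> col A0 (r j, 1, r (Suc j))" by (auto simp: accepting_run_def A0_def)
  then show False by (auto simp: INFM_nat A0_def)
qed

definition AA :: "nat \<Rightarrow> gba" where
  "AA n = (if n = 0 then A0 else An n)"

theorem proposition33:
  shows "\<exists>A :: nat \<Rightarrow> gba. \<forall>n.
     wf_gba (A n) \<and> card (states (A n)) = n + 1 \<and> card (colours (A n)) = 2 \<and>
     (\<forall>B. recognises_same B (A n) \<and>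
          (\<forall>B'. recognises_same B' (A n) \<longrightarrow> card (states B) \<le> card (states B'))
          \<longrightarrow> card (colours B) \<ge> 2 ^ n)"
proof (intro exI[of _ AA] allI conjI impI)
  fix n
  show "wf_gba (AA n)" using wf_A0 wf_An by (simp add: AA_def)
  show "card (states (AA n)) = n + 1" by (simp add: AA_def A0_def An_def)
  show "card (colours (AA n)) = 2" by (simp add: AA_def A0_def An_def)
  fix B
  assume h: "recognises_same B (AA n) \<and>
          (\<forall>B'. recognises_same B' (AA n) \<longrightarrow> card (states B) \<le> card (states B'))"
  have wf: "wf_gba B" using h by (simp add: recognises_same_def)
  show "card (colours B) \<ge> 2 ^ n"
  proof (cases "n = 0")
    case True
    have "recognises_same A0 (AA n)" using True wf_A0 by (simp add: AA_def recognises_same_def)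
    then have "card (states B) \<le> 1" using h by (auto simp: A0_def)
    then have "states B = {init B}" using single_state wf by blast
    then show ?thesis using lower_zero h True by (simp add: AA_def)
  next
    case False
    have "lang (B1 n) = lang (An n)" using lang_An lang_B1 by blast
    then have "recognises_same (B1 n) (AA n)" using False wf_B1
      by (simp add: AA_def recognises_same_def B1_def An_def)
    then have "card (states B) \<le> 1" using h by (auto simp: B1_def)
    then have "states B = {init B}" using single_state wf by blast
    then show ?thesis using lower_general[of n B] h False by (simp add: AA_def)
  qed
qed

end
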